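(* Let $n,p$ be positive integers, $X\in\mathbb{R}^{n\times p}$, $\mathbf y\in\mathbb{R}^n$, $\delta>0$ and $\lambda>0$. The function $g_\lambda:\mathbb{R}^p\to\mathbb{R}$, $g_\lambda(\mathbf w)=f_\lambda(\mathbf t(\mathbf w))$, is continuous at every point $\mathbf w\in\mathbb{R}^p$.
   Context: For $\mathbf t\in[0,1]^p$, $T_{\mathbf t}=\mathrm{Diag}(t_1,\dots,t_p)$, $X_{\mathbf t}=XT_{\mathbf t}$, $L_{\mathbf t}=\frac1n[X_{\mathbf t}^\top X_{\mathbf t}+\delta(I-T_{\mathbf t}^2)]$ with $I$ the $p\times p$ identity, $\widetilde{\boldsymbol\beta}_{\mathbf t}:=L_{\mathbf t}^{+}\left(X_{\mathbf t}^\top\mathbf y/n\right)$ with $L_{\mathbf t}^+$ the Moore–Penrose pseudo-inverse, and $f_\lambda(\mathbf t)=\frac1n\|\mathbf y-X_{\mathbf t}\widetilde{\boldsymbol\beta}_{\mathbf t}\|_2^2+\lambda\sum_{j=1}^p t_j$. The map $\mathbf t(\mathbf w)$ is defined coordinatewise by $t_j(w_j)=1-\exp(-w_j^2)$, $j=1,\dots,p$. *)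

theory Defs
  imports "HOL-Analysis.Analysis"
begin

text \<open>Moore--Penrose pseudo-inverse, defined by the four Penrose conditions
  (it exists and is unique for every real matrix).\<close>
definition is_pinv :: "real^'m^'n \<Rightarrow> real^'n^'m \<Rightarrow> bool" where
  "is_pinv A B \<longleftrightarrow> A ** B ** A = A \<and> B ** A ** B = B \<and>
     transpose (A ** B) = A ** B \<and> transpose (B ** A) = B ** A"

definition pinv :: "real^'m^'n \<Rightarrow> real^'n^'m" where
  "pinv A = (THE B. is_pinv A B)"

definition Tmat :: "real^'p \<Rightarrow> real^'p^'p" where
  "Tmat t = (\<chi> i j. if i = j then t $ i else 0)"

definition Xt :: "real^'p^'n \<Rightarrow> real^'p \<Rightarrow> real^'p^'n" where
  "Xt X t = X ** Tmat t"

definition Lt :: "real^'p^'n \<Rightarrow> real \<Rightarrow> real^'p \<Rightarrow> real^'p^'p" where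
  "Lt X \<delta> t = (1 / real CARD('n)) *\<^sub>R
     (transpose (Xt X t) ** Xt X t + \<delta> *\<^sub>R (mat 1 - Tmat t ** Tmat t))"

definition beta_t :: "real^'p^'n \<Rightarrow> real^'n \<Rightarrow> real \<Rightarrow> real^'p \<Rightarrow> real^'p" where
  "beta_t X y \<delta> t = pinv (Lt X \<delta> t) *v ((1 / real CARD('n)) *\<^sub>R (transpose (Xt X t) *v y))"

definition f_obj :: "real^'p^'n \<Rightarrow> real^'n \<Rightarrow> real \<Rightarrow> real \<Rightarrow> real^'p \<Rightarrow> real" where
  "f_obj X y \<delta> lam t = (1 / real CARD('n)) * (norm (y - Xt X t *v beta_t X y \<delta> t))\<^sup>2
     + lam * (\<Sum>j\<in>UNIV. t $ j)"

definition t_of_w :: "real^'p \<Rightarrow> real^'p" where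
  "t_of_w w = (\<chi> j. 1 - exp (- ((w $ j)\<^sup>2)))"

definition g_obj :: "real^'p^'n \<Rightarrow> real^'n \<Rightarrow> real \<Rightarrow> real \<Rightarrow> real^'p \<Rightarrow> real" where
  "g_obj X y \<delta> lam w = f_obj X y \<delta> lam (t_of_w w)"

end

theory Submission
  imports Defs
begin

lemma isCont_vecI:
  fixes f :: "'a::t2_space \<Rightarrow> 'b::topological_space ^'n"
  assumes "\<And>i. isCont (\<lambda>x. f x $ i) a" shows "isCont f a"
  using assms unfolding isCont_def by (intro vec_tendstoI) auto

lemma isCont_mmult:
  fixes A :: "'a::t2_space \<Rightarrow> real^'m^'n" and B :: "'a \<Rightarrow> real^'k^'m"
  assumes "isCont A a" "isCont B a" shows "isCont (\<lambda>x. A x ** B x) a"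
  by (intro isCont_vecI) (simp add: matrix_matrix_mult_def assms continuous_intros)

lemma isCont_mvmult:
  fixes A :: "'a::t2_space \<Rightarrow> real^'m^'n" and B :: "'a \<Rightarrow> real^'m"
  assumes "isCont A a" "isCont B a" shows "isCont (\<lambda>x. A x *v B x) a"
  by (intro isCont_vecI) (simp add: matrix_vector_mult_def assms continuous_intros)

lemma isCont_transpose:
  fixes A :: "'a::t2_space \<Rightarrow> real^'m^'n"
  assumes "isCont A a" shows "isCont (\<lambda>x. transpose (A x)) a"
  by (intro isCont_vecI) (simp add: transpose_def assms continuous_intros)

lemma isCont_det:
  fixes A :: "'a::t2_space \<Rightarrow> real^'n^'n"
  assumes "isCont A a" shows "isCont (\<lambda>x. det (A x)) a"
  unfolding det_def by (simp add: assms continuous_intros)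

lemma isCont_t: "isCont t_of_w w"
  by (intro isCont_vecI) (simp add: t_of_w_def continuous_intros)

lemma isCont_T: "isCont (\<lambda>w. Tmat (t_of_w w)) w"
proof (intro isCont_vecI)
  fix i j
  show "isCont (\<lambda>x. Tmat (t_of_w x) $ i $ j) w"
    by (cases "i = j") (simp_all add: Tmat_def t_of_w_def continuous_intros)
qed

lemma Tmat_mv: "Tmat t *v x = (\<chi> j. t$j * x$j)"
proof -
  have "\<And>i. (\<Sum>j\<in>UNIV. (if i = j then t $ i else 0) * x $ j) = t$i * x$i"
    by (simp add: if_distrib[of "\<lambda>z. z * _"] cong: if_cong)
  then show ?thesis by (simp add: vec_eq_iff matrix_vector_mult_def Tmat_def)
qed

lemma diag_mv: "(mat 1 - Tmat t ** Tmat t) *v x = (\<chi> j. (1 - (t$j)^2) * x$j)"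
  by (simp add: matrix_vector_mult_diff_rdistrib matrix_vector_mul_assoc[symmetric] Tmat_mv
       vec_eq_iff algebra_simps power2_eq_square)

lemma L_det:
  fixes X :: "real^'p^'n" and t :: "real^'p"
  assumes d: "\<delta> > 0" and t: "\<And>j. (t$j)^2 < 1"
  shows "det (Lt X \<delta> t) \<noteq> 0"
proof -
  define M where "M = Xt X t"
  have ker: "x = 0" if x: "Lt X \<delta> t *v x = 0" for x
  proof -
    have e: "Lt X \<delta> t *v x = (1 / real CARD('n)) *\<^sub>R (transpose M *v (M *v x) + \<delta> *\<^sub>R (\<chi> j. (1 - (t$j)^2) * x$j))"
      by (simp add: Lt_def M_def matrix_vector_mult_add_rdistrib matrix_vector_mul_assoc diag_mv
          scaleR_matrix_vector_assoc[symmetric])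
    have i1: "inner x (transpose M *v (M *v x)) = inner (M *v x) (M *v x)"
      by (metis dot_lmul_matrix inner_commute transpose_matrix_vector)
    have i2: "inner x (\<chi> j. (1 - (t$j)^2) * x$j) = (\<Sum>j\<in>UNIV. (1 - (t$j)^2) * (x$j)^2)"
      by (simp add: inner_vec_def power2_eq_square algebra_simps)
    have "0 = inner x (Lt X \<delta> t *v x)" using x by simp
    also have "\<dots> = (1 / real CARD('n)) * (inner (M *v x) (M *v x) + \<delta> * (\<Sum>j\<in>UNIV. (1 - (t$j)^2) * (x$j)^2))"
      unfolding e inner_scaleR_right inner_add_right i1 i2 by simp
    finally have z: "inner (M *v x) (M *v x) + \<delta> * (\<Sum>j\<in>UNIV. (1 - (t$j)^2) * (x$j)^2) = 0"
      by simp
    have nn: "\<And>j. 0 \<le> (1 - (t$j)^2) * (x$j)^2" using t by (simp add: less_imp_le)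
    have s0: "(\<Sum>j\<in>UNIV. (1 - (t$j)^2) * (x$j)^2) \<ge> 0" by (simp add: sum_nonneg nn)
    have "(\<Sum>j\<in>UNIV. (1 - (t$j)^2) * (x$j)^2) = 0"
      using z s0 d inner_ge_zero[of "M *v x"]
      by (smt (verit) mult_pos_pos mult_nonneg_nonneg)
    then have "\<forall>j\<in>UNIV. (1 - (t$j)^2) * (x$j)^2 = 0"
      using sum_nonneg_eq_0_iff[of UNIV "\<lambda>j. (1 - (t$j)^2) * (x$j)^2"] nn by simp
    have "x$j = 0" for j
    proof -
      have "1 - (t$j)^2 \<noteq> 0" using t[of j] by simp
      then show ?thesis using \<open>\<forall>j\<in>UNIV. (1 - (t$j)^2) * (x$j)^2 = 0\<close> by (simp, blast)
    qed
    then show ?thesis by (simp add: vec_eq_iff)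
  qed
  have "invertible (Lt X \<delta> t)"
    unfolding invertible_left_inverse matrix_left_invertible_ker using ker by blast
  then show ?thesis by (simp add: invertible_det_nz)
qed

lemma pinv_inv:
  fixes L :: "real^'p^'p"
  assumes "L ** B = mat 1" "B ** L = mat 1"
  shows "pinv L = B"
  unfolding pinv_def
proof (rule the_equality)
  show "is_pinv L B" using assms
    by (simp add: is_pinv_def matrix_mul_lid matrix_mul_rid transpose_mat)
next
  fix B' assume "is_pinv L B'"
  then have h: "L ** B' ** L = L" by (simp add: is_pinv_def)
  have "B' = (B ** L) ** B' ** (L ** B)" using assms by (simp add: matrix_mul_lid matrix_mul_rid)
  also have "\<dots> = B ** (L ** B' ** L) ** B" by (simp add: matrix_mul_assoc)
  also have "\<dots> = B" using assms h by (simp add: matrix_mul_assoc matrix_mul_rid)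
  finally show "B' = B" .
qed

lemma beta_formula:
  fixes X :: "real^'p^'n" and t :: "real^'p"
  assumes d: "\<delta> > 0" and t: "\<And>j. (t$j)^2 < 1"
  shows "beta_t X y \<delta> t = (\<chi> k. det(\<chi> i j. if j=k then ((1 / real CARD('n)) *\<^sub>R (transpose (Xt X t) *v y))$i else Lt X \<delta> t$i$j) / det (Lt X \<delta> t))"
proof -
  let ?L = "Lt X \<delta> t" and ?b = "(1 / real CARD('n)) *\<^sub>R (transpose (Xt X t) *v y)"
  have dn: "det ?L \<noteq> 0" using L_det[OF d t] .
  then obtain B where B: "?L ** B = mat 1" "B ** ?L = mat 1"
    unfolding invertible_det_nz[symmetric] invertible_def by blast
  have "beta_t X y \<delta> t = B *v ?b" by (simp add: beta_t_def pinv_inv[OF B])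
  moreover have "?L *v (B *v ?b) = ?b" by (simp add: matrix_vector_mul_assoc B)
  ultimately show ?thesis using cramer[OF dn, of "B *v ?b" ?b] by (simp only:)
qed

lemma t_bound: "((t_of_w w)$j)^2 < 1"
proof -
  have "exp (- ((w$j)^2)) \<le> 1" by simp
  moreover have "exp (- ((w$j)^2)) > 0" by simp
  ultimately have "0 \<le> 1 - exp (- ((w$j)^2))" "1 - exp (- ((w$j)^2)) < 1" by auto
  then show ?thesis by (simp add: t_of_w_def abs_square_less_1)
qed

theorem corollary1:
  fixes X :: "real^'p^'n" and y :: "real^'n" and \<delta> lam :: real and w :: "real^'p"
  assumes "\<delta> > 0" and "lam > 0"
  shows "isCont (g_obj X y \<delta> lam) w"
proof -
  have cX: "isCont (\<lambda>w. Xt X (t_of_w w)) w"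
    unfolding Xt_def by (intro isCont_mmult isCont_T continuous_intros)
  have cL: "isCont (\<lambda>w. Lt X \<delta> (t_of_w w)) w"
    unfolding Lt_def
    by (intro continuous_intros isCont_mmult isCont_transpose cX isCont_T)
  have cb: "isCont (\<lambda>w. (1 / real CARD('n)) *\<^sub>R (transpose (Xt X (t_of_w w)) *v y)) w"
    by (intro continuous_intros isCont_mvmult isCont_transpose cX)
  have cdet: "isCont (\<lambda>w. det (Lt X \<delta> (t_of_w w))) w" by (rule isCont_det[OF cL])
  have dn: "det (Lt X \<delta> (t_of_w w)) \<noteq> 0" by (rule L_det[OF assms(1) t_bound])
  have cbeta: "isCont (\<lambda>w. (\<chi> k. det(\<chi> i j. if j=k then ((1 / real CARD('n)) *\<^sub>R (transpose (Xt X (t_of_w w)) *v y))$i else Lt X \<delta> (t_of_w w)$i$j) / det (Lt X \<delta> (t_of_w w)))) w"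
  proof (intro isCont_vecI)
    fix k
    have "isCont (\<lambda>w. det(\<chi> i j. if j=k then ((1 / real CARD('n)) *\<^sub>R (transpose (Xt X (t_of_w w)) *v y))$i else Lt X \<delta> (t_of_w w)$i$j)) w"
    proof (intro isCont_det isCont_vecI)
      fix i j
      show "isCont (\<lambda>x. (\<chi> i j. if j=k then ((1 / real CARD('n)) *\<^sub>R (transpose (Xt X (t_of_w x)) *v y))$i else Lt X \<delta> (t_of_w x)$i$j) $ i $ j) w"
        using isCont_vec_nth[OF cb, of i] isCont_vec_nth[OF isCont_vec_nth[OF cL], of i j]
        by (cases "j = k") (simp_all del: transpose_matrix_vector)
    qed
    then show "isCont (\<lambda>x. (\<chi> k. det(\<chi> i j. if j=k then ((1 / real CARD('n)) *\<^sub>R (transpose (Xt X (t_of_w x)) *v y))$i else Lt X \<delta> (t_of_w x)$i$j) / det (Lt X \<delta> (t_of_w x))) $ k) w"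
      using cdet dn by (simp add: continuous_intros)
  qed
  have eq: "g_obj X y \<delta> lam = (\<lambda>w. (1 / real CARD('n)) * (norm (y - Xt X (t_of_w w) *v
     (\<chi> k. det(\<chi> i j. if j=k then ((1 / real CARD('n)) *\<^sub>R (transpose (Xt X (t_of_w w)) *v y))$i else Lt X \<delta> (t_of_w w)$i$j) / det (Lt X \<delta> (t_of_w w)))))\<^sup>2
     + lam * (\<Sum>j\<in>UNIV. t_of_w w $ j))"
    by (rule ext) (simp add: g_obj_def f_obj_def beta_formula[OF assms(1) t_bound])
  show ?thesis unfolding eq
    by (intro continuous_intros isCont_mvmult cX cbeta isCont_vec_nth isCont_t)
qed

end
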